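(* Let $K\subset\mathbb{R}^m$ be a self-dual cone and $L\subset\mathbb{R}^m$ a proper cone. If $K$ is an $L$-isotone projection set and at least one of $\operatorname{int}(K)\cap L$ or $\operatorname{int}(K)\cap L^*$ is nonempty, then $K=A\mathbb{R}^m_+$ for some orthogonal $m\times m$ matrix $A$. Moreover, the only proper cones $L$ such that $\mathbb{R}^m_+$ is an $L$-isotone projection set are the orthants of the reference system, i.e. the cones $\{x\in\mathbb{R}^m:\varepsilon^i x^i\ge 0,\ i=1,\dots,m\}$ with $\varepsilon^i\in\{-1,1\}$.
   Context: $\mathbb{R}^m$ carries the standard inner product with a fixed Cartesian coordinate system, and $\mathbb{R}^m_+=\{x:x^i\ge 0,\ i=1,\dots,m\}$. A convex cone is a nonempty set $K$ with $K+K\subset K$, $tK\subset K$ for $t\ge0$; a proper cone is a closed convex cone that is pointed ($K\cap(-K)=\{0\}$) and generating ($K-K=\mathbb{R}^m$). The dual cone is $K^*=\{y:\langle x,y\rangle\ge0\ \forall x\in K\}$; $K$ is self-dual if $K=K^*$. For a cone $L$, $x\le_L y$ means $y-x\in L$. $P_D$ is the metric projection onto a nonempty closed convex set $D$; $D$ is an $L$-isotone projection set if $x\le_L y$ implies $P_Dx\le_L P_Dy$. *)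

theory Defs
  imports "HOL-Analysis.Analysis"
begin

definition convex_cone_set :: "('a::real_vector) set \<Rightarrow> bool" where
  "convex_cone_set K \<longleftrightarrow> K \<noteq> {} \<and> (\<forall>x\<in>K. \<forall>y\<in>K. x + y \<in> K)
      \<and> (\<forall>x\<in>K. \<forall>t::real. t \<ge> 0 \<longrightarrow> t *\<^sub>R x \<in> K)"

definition proper_cone :: "('a::real_normed_vector) set \<Rightarrow> bool" where
  "proper_cone K \<longleftrightarrow> convex_cone_set K \<and> closed K \<and> K \<inter> uminus ` K = {0}
      \<and> {x - y | x y. x \<in> K \<and> y \<in> K} = UNIV"

definition dual_cone :: "('a::real_inner) set \<Rightarrow> 'a set" where
  "dual_cone K = {y. \<forall>x\<in>K. inner x y \<ge> 0}"

definition self_dual :: "('a::real_inner) set \<Rightarrow> bool" where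
  "self_dual K \<longleftrightarrow> convex_cone_set K \<and> K = dual_cone K"

definition cone_le :: "('a::real_vector) set \<Rightarrow> 'a \<Rightarrow> 'a \<Rightarrow> bool" where
  "cone_le L x y \<longleftrightarrow> y - x \<in> L"

definition isotone_projection_set :: "('a::euclidean_space) set \<Rightarrow> 'a set \<Rightarrow> bool" where
  "isotone_projection_set D L \<longleftrightarrow> D \<noteq> {} \<and> closed D \<and> convex D
     \<and> (\<forall>x y. cone_le L x y \<longrightarrow> cone_le L (closest_point D x) (closest_point D y))"

definition nonneg_orthant :: "(real^'n) set" where
  "nonneg_orthant = {x. \<forall>i. x $ i \<ge> 0}"

end

theory Submission
  imports Defs
begin


lemma closest_point_char:
  fixes S :: "'a::euclidean_space set"
  assumes "convex S" "closed S" "p \<in> S" "\<And>c. c \<in> S \<Longrightarrow> inner (a - p) (c - p) \<le> 0"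
  shows "closest_point S a = p"
proof -
  have "\<forall>z\<in>S. dist a p \<le> dist a z"
  proof
    fix z assume z: "z \<in> S"
    have eq: "(a - p) - (z - p) = a - z" by simp
    have i: "inner (a - p) (z - p) = ((norm (a - p))^2 + (norm (z - p))^2 - (norm (a - z))^2) / 2"
      using dot_norm_neg[of "a - p" "z - p"] unfolding eq .
    have "inner (a - p) (z - p) \<le> 0" using assms(4)[OF z] .
    moreover have "(norm (z - p))^2 \<ge> 0" by simp
    moreover have "2 * inner (a - p) (z - p) = (norm (a - p))^2 + (norm (z - p))^2 - (norm (a - z))^2"
      using i by simp
    ultimately have "(norm (a - p))^2 \<le> (norm (a - z))^2" by linarith
    then have "norm (a - p) \<le> norm (a - z)" by (rule power2_le_imp_le) simp
    then show "dist a p \<le> dist a z" by (simp add: dist_norm)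
  qed
  then show ?thesis using closest_point_unique[OF assms(1-3)] by metis
qed

lemma ccs_convex: "convex_cone_set K \<Longrightarrow> convex K"
  unfolding convex_cone_set_def convex_def by blast

lemma ccs_zero: "convex_cone_set K \<Longrightarrow> 0 \<in> K"
  unfolding convex_cone_set_def by (metis all_not_in_conv order_refl scaleR_zero_left)

lemma ccs_sum: assumes "convex_cone_set K" "finite I" "\<And>i. i \<in> I \<Longrightarrow> f i \<in> K" shows "sum f I \<in> K"
  using assms(2,3)
proof (induction I rule: finite_induct)
  case empty then show ?case using assms(1) by (simp add: ccs_zero)
next
  case (insert x F) then show ?case using assms(1) unfolding convex_cone_set_def by simp
qed

lemma dual_closed: "closed (dual_cone K)"
proof -
  have "dual_cone K = (\<Inter>x\<in>K. {y. inner x y \<ge> 0})" unfolding dual_cone_def by auto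
  then show ?thesis by (auto intro!: closed_INT closed_Collect_le continuous_intros)
qed

lemma sd_closed: "self_dual K \<Longrightarrow> closed K"
  unfolding self_dual_def using dual_closed by metis

lemma sd_inner: "self_dual K \<Longrightarrow> x \<in> K \<Longrightarrow> y \<in> K \<Longrightarrow> inner x y \<ge> 0"
  unfolding self_dual_def dual_cone_def by blast

lemma sd_mem: "self_dual K \<Longrightarrow> (\<And>c. c \<in> K \<Longrightarrow> inner c y \<ge> 0) \<Longrightarrow> y \<in> K"
  unfolding self_dual_def dual_cone_def by blast

lemma sd_P_props:
  fixes K :: "'a::euclidean_space set"
  assumes sd: "self_dual K"
  shows "closest_point K x \<in> K" "closest_point K x - x \<in> K"
    "inner (closest_point K x) (closest_point K x - x) = 0"
    "closest_point K (-x) = closest_point K x - x"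
proof -
  have cc: "convex_cone_set K" using sd unfolding self_dual_def by blast
  have cl: "closed K" using sd sd_closed by blast
  have cv: "convex K" using cc ccs_convex by blast
  have ne: "K \<noteq> {}" using cc unfolding convex_cone_set_def by blast
  define p where "p = closest_point K x"
  have pK: "p \<in> K" using closest_point_in_set[OF cl ne] p_def by simp
  have dot: "\<And>c. c \<in> K \<Longrightarrow> inner (x - p) (c - p) \<le> 0"
    using closest_point_dot[OF cv cl] p_def by blast
  have "inner (x - p) (0 - p) \<le> 0" using dot ccs_zero[OF cc] by blast
  moreover have "2 *\<^sub>R p \<in> K" using cc pK unfolding convex_cone_set_def by simp
  then have "inner (x - p) (2 *\<^sub>R p - p) \<le> 0" using dot by blast
  ultimately have orth: "inner (x - p) p = 0"
    by (simp add: inner_diff_right algebra_simps scaleR_2)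
  have dotc: "\<And>c. c \<in> K \<Longrightarrow> inner c (p - x) \<ge> 0"
  proof -
    fix c assume "c \<in> K"
    then have "inner (x - p) (c - p) \<le> 0" by (rule dot)
    then show "inner c (p - x) \<ge> 0" using orth
      by (simp add: inner_diff_right inner_diff_left inner_commute algebra_simps)
  qed
  have pxK: "p - x \<in> K" using sd_mem[OF sd dotc] .
  show "closest_point K x \<in> K" using pK p_def by simp
  show "closest_point K x - x \<in> K" using pxK p_def by simp
  have o1: "inner x p - inner p p = 0" using orth by (simp only: inner_diff_left)
  have o2: "inner p (p - x) = inner p p - inner x p" by (simp add: inner_diff_right inner_commute)
  show "inner (closest_point K x) (closest_point K x - x) = 0" using o1 o2 p_def by simp
  have o3: "inner p p = inner p x" using o1 by (simp add: inner_commute)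
  have "closest_point K (-x) = p - x"
  proof (rule closest_point_char[OF cv cl pxK])
    fix c assume c: "c \<in> K"
    have e1: "- x - (p - x) = - p" by simp
    have e2: "c - (p - x) = c + (x - p)" by simp
    have e3: "inner p (x - p) = 0" using orth by (simp add: inner_commute)
    have "inner (- x - (p - x)) (c - (p - x)) = inner (-p) (c + (x - p))" by (simp only: e1 e2)
    also have "\<dots> = - inner p c - inner p (x - p)" by (simp add: inner_add_right)
    also have "\<dots> = - inner p c" using e3 by simp
    finally show "inner (- x - (p - x)) (c - (p - x)) \<le> 0" using sd_inner[OF sd pK c] by simp
  qed
  then show "closest_point K (-x) = closest_point K x - x" using p_def by simp
qed

lemma sd_P_zero:
  fixes K :: "'a::euclidean_space set"
  assumes sd: "self_dual K" and z: "-z \<in> K"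
  shows "closest_point K z = 0"
proof -
  have cc: "convex_cone_set K" using sd unfolding self_dual_def by blast
  show ?thesis
  proof (rule closest_point_char[OF ccs_convex[OF cc] sd_closed[OF sd] ccs_zero[OF cc]])
    fix c assume "c \<in> K"
    then have "inner (-z) c \<ge> 0" using sd_inner[OF sd z] by blast
    then show "inner (z - 0) (c - 0) \<le> 0" by simp
  qed
qed



lemma L_eq_K:
  fixes K L :: "'a::euclidean_space set"
  assumes sd: "self_dual K" and pL: "proper_cone L" and iso: "isotone_projection_set K L"
    and int: "interior K \<inter> L \<noteq> {} \<or> interior K \<inter> dual_cone L \<noteq> {}"
  shows "L = K"
proof -
  let ?P = "closest_point K"
  have cc: "convex_cone_set K" using sd unfolding self_dual_def by blast
  have mono: "\<And>x y. y - x \<in> L \<Longrightarrow> ?P y - ?P x \<in> L"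
    using iso unfolding isotone_projection_set_def cone_le_def by blast
  have P0: "?P 0 = 0" using sd_P_zero[OF sd] ccs_zero[OF cc] by simp
  have negL: "- ?P (-w) \<in> L" if "w \<in> L" for w
    using mono[where x="-w" and y=0] that P0 by simp
  have toK: "w \<in> K" if "?P (-w) = 0" for w
  proof -
    have "?P w - w = 0" using sd_P_props(4)[OF sd, of w] that by simp
    then have "w = ?P w" by simp
    then show ?thesis using sd_P_props(1)[OF sd, of w] by simp
  qed
  have pointed: "L \<inter> uminus ` L = {0}" using pL unfolding proper_cone_def by blast
  have gen: "{x - y | x y. x \<in> L \<and> y \<in> L} = UNIV" using pL unfolding proper_cone_def by blast
  show ?thesis
  proof (cases "interior K \<inter> L \<noteq> {}")
    case True
    then obtain u where uK: "u \<in> interior K" and uL: "u \<in> L" by blast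
    obtain r where r: "r > 0" "ball u r \<subseteq> K" using uK mem_interior by blast
    have KL: "K \<subseteq> L"
    proof
      fix c assume cK: "c \<in> K"
      define t where "t = norm c / r + 1"
      have "norm c / r \<ge> 0" using r by simp
      then have tpos: "t > 0" unfolding t_def by linarith
      have "norm c < r * t" using r by (simp add: t_def field_simps)
      then have "norm (c /\<^sub>R t) < r" using tpos r by (simp add: field_simps)
      then have "u - c /\<^sub>R t \<in> ball u r" by (simp add: dist_norm)
      then have "u - c /\<^sub>R t \<in> K" using r by blast
      then have "t *\<^sub>R (u - c /\<^sub>R t) \<in> K" using cc tpos unfolding convex_cone_set_def by simp
      moreover have "t *\<^sub>R (u - c /\<^sub>R t) = t *\<^sub>R u - c" using tpos by (simp add: algebra_simps)
      ultimately have "- (c - t *\<^sub>R u) \<in> K" by simp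
      then have Pz: "?P (c - t *\<^sub>R u) = 0" using sd_P_zero[OF sd] by blast
      have "t *\<^sub>R u \<in> L" using pL uL tpos unfolding proper_cone_def convex_cone_set_def by simp
      then have "?P c - ?P (c - t *\<^sub>R u) \<in> L" using mono[where x="c - t *\<^sub>R u" and y=c] by simp
      then show "c \<in> L" using Pz closest_point_self[OF cK] by simp
    qed
    have "L \<subseteq> K"
    proof
      fix w assume wL: "w \<in> L"
      have "?P (-w) \<in> L" using KL sd_P_props(1)[OF sd] by blast
      moreover have "- ?P (-w) \<in> L" using negL wL by blast
      ultimately have "?P (-w) \<in> L \<inter> uminus ` L" by (metis IntI image_eqI minus_minus)
      then have "?P (-w) = 0" using pointed by blast
      then show "w \<in> K" using toK by blast
    qed
    then show ?thesis using KL by blast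
  next
    case False
    then obtain u where uK: "u \<in> interior K" and uL: "u \<in> dual_cone L" using int by blast
    obtain r where r: "r > 0" "ball u r \<subseteq> K" using uK mem_interior by blast
    have uK2: "u \<in> K" using r by (meson centre_in_ball subsetD)
    have LK: "L \<subseteq> K"
    proof
      fix w assume wL: "w \<in> L"
      define v where "v = ?P (-w)"
      have vK: "v \<in> K" using sd_P_props(1)[OF sd] v_def by blast
      have "inner (-v) u \<ge> 0" using uL negL[OF wL] v_def unfolding dual_cone_def by blast
      moreover have "inner v u \<ge> 0" using sd_inner[OF sd vK uK2] .
      ultimately have vu: "inner v u = 0" by simp
      have "v = 0"
      proof (rule ccontr)
        assume vn: "v \<noteq> 0"
        define e where "e = r / (2 * norm v)"
        have epos: "e > 0" using vn r by (simp add: e_def)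
        have "norm (e *\<^sub>R v) = r / 2" using vn r by (simp add: e_def)
        then have "u - e *\<^sub>R v \<in> ball u r" using r by (simp add: dist_norm)
        then have "u - e *\<^sub>R v \<in> K" using r by blast
        then have "inner v (u - e *\<^sub>R v) \<ge> 0" using sd_inner[OF sd vK] by blast
        then have "- e * inner v v \<ge> 0" using vu by (simp add: inner_diff_right)
        moreover have "inner v v > 0" using vn by simp
        then have "e * inner v v > 0" using epos by simp
        ultimately show False by linarith
      qed
      then show "w \<in> K" using toK[of w] v_def by simp
    qed
    have "K \<subseteq> L"
    proof
      fix c assume cK: "c \<in> K"
      obtain w1 w2 where w: "w1 \<in> L" "w2 \<in> L" "c = w1 - w2" using gen by blast
      have "-(-w2) \<in> K" using LK w by auto
      then have "?P (-w2) = 0" using sd_P_zero[OF sd] by blast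
      moreover have "?P c - ?P (-w2) \<in> L" using mono[where x="-w2" and y=c] w by simp
      ultimately show "c \<in> L" using closest_point_self[OF cK] by simp
    qed
    then show ?thesis using LK by blast
  qed
qed



lemma sd_iso_orthant:
  fixes K :: "(real^'n) set"
  assumes sd: "self_dual K"
    and iso: "\<And>x y. y - x \<in> K \<Longrightarrow> closest_point K y - closest_point K x \<in> K"
    and uK: "u \<in> interior K"
    and gen: "{x - y | x y. x \<in> K \<and> y \<in> K} = UNIV"
  shows "\<exists>A::real^'n^'n. orthogonal_matrix A \<and> K = (\<lambda>x. A *v x) ` nonneg_orthant"
proof -
  let ?P = "closest_point K"
  have cc: "convex_cone_set K" using sd unfolding self_dual_def by blast
  have scl: "\<And>x t. x \<in> K \<Longrightarrow> t \<ge> 0 \<Longrightarrow> t *\<^sub>R x \<in> K" using cc unfolding convex_cone_set_def by blast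
  have add: "\<And>x y. x \<in> K \<Longrightarrow> y \<in> K \<Longrightarrow> x + y \<in> K" using cc unfolding convex_cone_set_def by blast
  obtain r where r: "r > 0" "ball u r \<subseteq> K" using uK mem_interior by blast
  have bound: "r / 2 * norm x \<le> inner x u" if xK: "x \<in> K" for x
  proof (cases "x = 0")
    case True then show ?thesis by simp
  next
    case False
    define e where "e = r / (2 * norm x)"
    have epos: "e > 0" using False r by (simp add: e_def)
    have "norm (e *\<^sub>R x) = r / 2" using False r by (simp add: e_def)
    then have "u - e *\<^sub>R x \<in> ball u r" using r by (simp add: dist_norm)
    then have "u - e *\<^sub>R x \<in> K" using r by blast
    then have "inner x (u - e *\<^sub>R x) \<ge> 0" using sd_inner[OF sd xK] by blast
    then have "e * inner x x \<le> inner x u" by (simp add: inner_diff_right)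
    moreover have "e * inner x x = r / 2 * norm x"
    proof -
      have nx: "inner x x = norm x * norm x" by (metis power2_eq_square power2_norm_eq_inner)
      have "norm x > 0" using False by simp
      then have "e * (norm x * norm x) = r / 2 * norm x" unfolding e_def by (simp add: field_simps)
      then show ?thesis using nx by simp
    qed
    ultimately show ?thesis by simp
  qed
  have posu: "inner x u > 0" if "x \<in> K" "x \<noteq> 0" for x
  proof -
    have "r / 2 * norm x > 0" using that r by simp
    then show ?thesis using bound[OF that(1)] by linarith
  qed
  define B where "B = {x \<in> K. inner x u = 1}"
  have BK: "B \<subseteq> K" using B_def by blast
  have cl: "closed K" using sd sd_closed by blast
  have "closed B"
  proof -
    have "B = K \<inter> {x. inner u x = 1}" using B_def by (auto simp: inner_commute)
    moreover have "closed {x. inner u x = 1}" by (rule closed_hyperplane)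
    ultimately show ?thesis using cl closed_Int by metis
  qed
  moreover have "bounded B"
  proof -
    have "norm x \<le> 2 / r" if "x \<in> B" for x
    proof -
      have xK: "x \<in> K" and xu: "inner x u = 1" using that B_def by auto
      have "r / 2 * norm x \<le> 1" using bound[OF xK] xu by simp
      then show ?thesis using r by (simp add: field_simps)
    qed
    then show ?thesis unfolding bounded_iff by blast
  qed
  ultimately have cB: "compact B" using compact_eq_bounded_closed by blast
  have cvB: "convex B"
    unfolding convex_def B_def
  proof (intro ballI allI impI, clarify)
    fix x y :: "real^'n" and a b :: real
    assume "x \<in> K" "inner x u = 1" "y \<in> K" "inner y u = 1" "0 \<le> a" "0 \<le> b" "a + b = 1"
    then show "a *\<^sub>R x + b *\<^sub>R y \<in> K \<and> inner (a *\<^sub>R x + b *\<^sub>R y) u = 1"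
      using add scl by (simp add: inner_add_left)
  qed
  define E where "E = {x. x extreme_point_of B}"
  have BE: "B = convex hull E" using Krein_Milman_Minkowski[OF cB cvB] E_def by blast
  have EB: "E \<subseteq> B" unfolding E_def extreme_point_of_def by blast
  have ext: "p = inner p u *\<^sub>R e" if eE: "e \<in> E" and pK: "p \<in> K" and epK: "e - p \<in> K" for e p
  proof -
    have eB: "e \<in> B" using eE EB by blast
    have eu: "inner e u = 1" using eB B_def by blast
    show ?thesis
    proof (cases "p = 0")
      case True then show ?thesis by simp
    next
      case pn: False
      show ?thesis
      proof (cases "e - p = 0")
        case True then show ?thesis using eu by simp
      next
        case qn: False
        define t where "t = inner p u"
        have tpos: "t > 0" using posu[OF pK pn] t_def by simp
        have qpos: "inner (e - p) u > 0" using posu[OF epK qn] .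
        then have t1: "t < 1" using eu t_def by (simp add: inner_diff_left)
        define a where "a = p /\<^sub>R t"
        define b where "b = (e - p) /\<^sub>R (1 - t)"
        have aB: "a \<in> B" using tpos pK scl unfolding a_def B_def t_def by simp
        have bB: "b \<in> B"
          using t1 epK scl eu unfolding b_def B_def t_def by (simp add: inner_diff_left)
        have ta: "t *\<^sub>R a = p" using tpos by (simp add: a_def)
        have tb: "(1 - t) *\<^sub>R b = e - p" using t1 by (simp add: b_def)
        have ecomb: "e = t *\<^sub>R a + (1 - t) *\<^sub>R b" using ta tb by simp
        have "a = b"
        proof (rule ccontr)
          assume "a \<noteq> b"
          then have "e \<in> open_segment b a"
            unfolding in_segment using tpos t1 ecomb by (intro conjI exI[of _ t]) (auto simp: algebra_simps)
          then show False using eE aB bB unfolding E_def extreme_point_of_def by blast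
        qed
        moreover have "t *\<^sub>R a + (1 - t) *\<^sub>R a = a" by (simp add: algebra_simps)
        ultimately have "e = a" using ecomb by simp
        then show ?thesis using tpos unfolding a_def t_def by simp
      qed
    qed
  qed
  have orthE: "inner e f = 0" if eE: "e \<in> E" and fE: "f \<in> E" and ef: "e \<noteq> f" for e f
  proof -
    have eu: "inner e u = 1" and fu: "inner f u = 1" using eE fE EB B_def by blast+
    have eK: "e \<in> K" and fK: "f \<in> K" using eE fE EB BK by blast+
    define x where "x = e - f"
    define p where "p = ?P x"
    define q where "q = ?P (-x)"
    have pK: "p \<in> K" using sd_P_props(1)[OF sd] p_def by blast
    have qK: "q \<in> K" using sd_P_props(1)[OF sd] q_def by blast
    have "?P e - ?P x \<in> K" using iso[where x=x and y=e] fK x_def by simp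
    then have "e - p \<in> K" using closest_point_self[OF eK] p_def by simp
    then have pe: "p = inner p u *\<^sub>R e" using ext[OF eE pK] by blast
    have "?P f - ?P (-x) \<in> K" using iso[where x="-x" and y=f] eK x_def by simp
    then have "f - q \<in> K" using closest_point_self[OF fK] q_def by simp
    then have qf: "q = inner q u *\<^sub>R f" using ext[OF fE qK] by blast
    have qpx: "q = p - x" using sd_P_props(4)[OF sd, of x] p_def q_def by simp
    have orth: "inner p q = 0" using sd_P_props(3)[OF sd, of x] p_def qpx by simp
    define l where "l = inner p u"
    define m where "m = inner q u"
    have eq: "m *\<^sub>R f = l *\<^sub>R e - e + f" using pe qf qpx x_def l_def m_def by simp
    then have eq2: "(1 - l) *\<^sub>R e = (1 - m) *\<^sub>R f" by (simp add: algebra_simps)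
    then have "inner ((1 - l) *\<^sub>R e) u = inner ((1 - m) *\<^sub>R f) u" by simp
    then have lm: "1 - l = 1 - m" using eu fu by simp
    have "l = 1"
    proof (rule ccontr)
      assume "l \<noteq> 1"
      then have "e = f" using eq2 lm by simp
      then show False using ef by simp
    qed
    then have "m = 1" using lm by simp
    then have "p = e" "q = f" using pe qf \<open>l = 1\<close> l_def m_def by simp_all
    then show ?thesis using orth by simp
  qed
  have E0: "0 \<notin> E" using EB B_def by auto
  have "pairwise orthogonal E" unfolding pairwise_def orthogonal_def using orthE by blast
  then have indE: "independent E" using pairwise_orthogonal_independent E0 by blast
  then have finE: "finite E" using independent_bound by blast
  have Krep: "\<exists>l. (\<forall>e\<in>E. l e \<ge> 0) \<and> x = (\<Sum>e\<in>E. l e *\<^sub>R e)" if xK: "x \<in> K" for x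
  proof (cases "x = 0")
    case True then show ?thesis by (intro exI[of _ "\<lambda>_. 0"]) simp
  next
    case False
    define t where "t = inner x u"
    have tpos: "t > 0" using posu[OF xK False] t_def by simp
    have "x /\<^sub>R t \<in> B" using tpos xK scl unfolding B_def t_def by simp
    then obtain m where m: "\<forall>e\<in>E. 0 \<le> m e" "(\<Sum>e\<in>E. m e *\<^sub>R e) = x /\<^sub>R t"
      using BE convex_hull_finite[OF finE] by auto
    have "x = t *\<^sub>R (x /\<^sub>R t)" using tpos by simp
    also have "\<dots> = t *\<^sub>R (\<Sum>e\<in>E. m e *\<^sub>R e)" using m(2) by simp
    also have "\<dots> = (\<Sum>e\<in>E. (t * m e) *\<^sub>R e)" by (simp add: scaleR_sum_right)
    finally show ?thesis using m(1) tpos by (intro exI[of _ "\<lambda>e. t * m e"]) simp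
  qed
  have EK: "E \<subseteq> K" using EB BK by blast
  have "span E = UNIV"
  proof -
    have "K \<subseteq> span E"
    proof
      fix x assume "x \<in> K"
      then obtain l where "x = (\<Sum>e\<in>E. l e *\<^sub>R e)" using Krep by blast
      then show "x \<in> span E" by (simp add: span_sum span_scale span_base)
    qed
    have "x \<in> span E" for x
    proof -
      have "x \<in> {x - y | x y. x \<in> K \<and> y \<in> K}" using gen by simp
      then obtain a b where "a \<in> K" "b \<in> K" "x = a - b" by blast
      then show ?thesis using \<open>K \<subseteq> span E\<close> span_diff by blast
    qed
    then show ?thesis by blast
  qed
  then have cardE: "card E = CARD('n)" using dim_span_eq_card_independent[OF indE] by simp
  obtain g where g: "bij_betw g (UNIV::'n set) E"
    using finite_same_card_bij[OF finite_class.finite_UNIV finE] cardE by auto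
  have gE: "g i \<in> E" for i using g bij_betwE by blast
  have gn: "g i \<noteq> 0" for i using gE E0 by metis
  define v where "v i = g i /\<^sub>R norm (g i)" for i
  define A :: "real^'n^'n" where "A = (\<chi> i j. v j $ i)"
  have col: "column j A = v j" for j unfolding A_def column_def by simp
  have "orthogonal_matrix A"
    unfolding orthogonal_matrix_orthonormal_columns col
  proof (intro conjI allI impI)
    fix i show "norm (v i) = 1" using gn unfolding v_def by simp
  next
    fix i j :: 'n assume "i \<noteq> j"
    then have "g i \<noteq> g j" using g unfolding bij_betw_def inj_on_def by blast
    then have "inner (g i) (g j) = 0" using orthE gE by blast
    then show "orthogonal (v i) (v j)" unfolding v_def orthogonal_def by simp
  qed
  moreover have "K = (\<lambda>x. A *v x) ` nonneg_orthant"
  proof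
    show "(\<lambda>x. A *v x) ` nonneg_orthant \<subseteq> K"
    proof clarify
      fix y :: "real^'n" assume y: "y \<in> nonneg_orthant"
      have "A *v y = (\<Sum>j\<in>UNIV. (y $ j / norm (g j)) *\<^sub>R g j)"
        unfolding matrix_mult_sum col v_def scalar_mult_eq_scaleR by (simp add: divide_inverse)
      also have "\<dots> \<in> K"
      proof (rule ccs_sum[OF cc finite_class.finite_UNIV])
        fix j
        have "y $ j / norm (g j) \<ge> 0" using y unfolding nonneg_orthant_def by simp
        then show "(y $ j / norm (g j)) *\<^sub>R g j \<in> K" using scl gE EK by blast
      qed
      finally show "A *v y \<in> K" .
    qed
  next
    show "K \<subseteq> (\<lambda>x. A *v x) ` nonneg_orthant"
    proof
      fix x assume "x \<in> K"
      then obtain l where l: "\<forall>e\<in>E. l e \<ge> 0" "x = (\<Sum>e\<in>E. l e *\<^sub>R e)" using Krep by blast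
      define y :: "real^'n" where "y = (\<chi> j. l (g j) * norm (g j))"
      have "y \<in> nonneg_orthant" using l(1) gE unfolding y_def nonneg_orthant_def by simp
      moreover have "A *v y = x"
      proof -
        have "A *v y = (\<Sum>j\<in>UNIV. l (g j) *\<^sub>R g j)"
          unfolding matrix_mult_sum col v_def scalar_mult_eq_scaleR y_def
        proof (rule sum.cong[OF refl])
          fix j
          have "norm (g j) \<noteq> 0" using gn by simp
          then show "((\<chi> j. l (g j) * norm (g j)) $ j) *\<^sub>R (g j /\<^sub>R norm (g j)) = l (g j) *\<^sub>R g j"
            by simp
        qed
        also have "\<dots> = (\<Sum>e\<in>E. l e *\<^sub>R e)" using sum.reindex_bij_betw[OF g, of "\<lambda>e. l e *\<^sub>R e"] by simp
        finally show ?thesis using l(2) by simp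
      qed
      ultimately show "x \<in> (\<lambda>x. A *v x) ` nonneg_orthant" by (metis image_eqI)
    qed
  qed
  ultimately show ?thesis by blast
qed



lemma orth_closed: "closed (nonneg_orthant :: (real^'n) set)"
  unfolding nonneg_orthant_def by (rule closed_positive_orthant)

lemma orth_convex: "convex (nonneg_orthant :: (real^'n) set)"
  unfolding nonneg_orthant_def by (rule convex_box_cart) (simp add: atLeast_def[symmetric])

lemma orth_proj: "closest_point (nonneg_orthant :: (real^'n) set) x = (\<chi> i. max (x$i) 0)"
proof (rule closest_point_char[OF orth_convex orth_closed])
  show "(\<chi> i. max (x$i) 0) \<in> nonneg_orthant" unfolding nonneg_orthant_def by simp
next
  fix c :: "real^'n" assume c: "c \<in> nonneg_orthant"
  have "inner (x - (\<chi> i. max (x$i) 0)) (c - (\<chi> i. max (x$i) 0))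
      = (\<Sum>i\<in>UNIV. (x$i - max (x$i) 0) * (c$i - max (x$i) 0))"
    unfolding inner_vec_def by simp
  also have "\<dots> \<le> 0"
  proof (rule sum_nonpos)
    fix i
    have "c$i \<ge> 0" using c unfolding nonneg_orthant_def by simp
    then show "(x$i - max (x$i) 0) * (c$i - max (x$i) 0) \<le> 0"
      by (cases "x$i \<ge> 0") (auto simp: max_def mult_nonpos_nonneg)
  qed
  finally show "inner (x - (\<chi> i. max (x$i) 0)) (c - (\<chi> i. max (x$i) 0)) \<le> 0" .
qed

lemma part2:
  fixes L :: "(real^'n) set"
  assumes pL: "proper_cone L"
  shows "isotone_projection_set nonneg_orthant L \<longleftrightarrow>
     (\<exists>\<epsilon>::'n \<Rightarrow> real. (\<forall>i. \<epsilon> i \<in> {-1, 1}) \<and> L = {x. \<forall>i. \<epsilon> i * x $ i \<ge> 0})"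
proof
  have cc: "convex_cone_set L" using pL unfolding proper_cone_def by blast
  have scl: "\<And>x t. x \<in> L \<Longrightarrow> t \<ge> 0 \<Longrightarrow> t *\<^sub>R x \<in> L" using cc unfolding convex_cone_set_def by blast
  have pointed: "L \<inter> uminus ` L = {0}" using pL unfolding proper_cone_def by blast
  have gen: "{x - y | x y. x \<in> L \<and> y \<in> L} = UNIV" using pL unfolding proper_cone_def by blast
  assume iso: "isotone_projection_set nonneg_orthant L"
  have mono: "(\<chi> i. max ((x + w)$i) 0) - (\<chi> i. max (x$i) 0) \<in> L" if "w \<in> L" for x w
  proof -
    have "cone_le L x (x + w)" unfolding cone_le_def using that by simp
    then show ?thesis using iso unfolding isotone_projection_set_def cone_le_def orth_proj by blast
  qed
  have comp: "(w$i) *\<^sub>R axis i 1 \<in> L" if wL: "w \<in> L" for w i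
  proof -
    define x :: "real^'n" where "x = (\<chi> j. if j = i then max (-(w$i)) 0 else -(\<bar>w$j\<bar> + 1))"
    have "(\<chi> j. max ((x + w)$j) 0) - (\<chi> j. max (x$j) 0) = (w$i) *\<^sub>R axis i 1"
      unfolding vec_eq_iff x_def by (auto simp: axis_def max_def)
    then show ?thesis using mono[OF wL, of x] by simp
  qed
  have ex: "\<exists>w\<in>L. w$i \<noteq> 0" for i
  proof -
    have "axis i (1::real) \<in> {x - y | x y. x \<in> L \<and> y \<in> L}" using gen by simp
    then obtain w1 w2 where w: "w1 \<in> L" "w2 \<in> L" "axis i 1 = w1 - w2" by blast
    then have "w1$i - w2$i = 1" by (metis axis_nth vector_minus_component)
    then show ?thesis using w by (metis zero_neq_one diff_zero)
  qed
  define W where "W i = (SOME w. w \<in> L \<and> w$i \<noteq> 0)" for i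
  have W: "W i \<in> L" "W i $ i \<noteq> 0" for i
    using someI_ex[of "\<lambda>w. w \<in> L \<and> w$i \<noteq> 0"] ex[of i] unfolding W_def by blast+
  define \<epsilon> where "\<epsilon> i = sgn (W i $ i)" for i
  have eps: "\<epsilon> i \<in> {-1, 1}" for i using W(2)[of i] unfolding \<epsilon>_def by (auto simp: sgn_if)
  have eps2: "\<epsilon> i * \<epsilon> i = 1" for i using eps[of i] by auto
  have epsL: "\<epsilon> i *\<^sub>R axis i 1 \<in> L" for i
  proof -
    have "(1 / \<bar>W i $ i\<bar>) *\<^sub>R ((W i $ i) *\<^sub>R axis i 1) \<in> L"
      using scl[OF comp[OF W(1)], of "1 / \<bar>W i $ i\<bar>"] by simp
    moreover have "(1 / \<bar>W i $ i\<bar>) * (W i $ i) = \<epsilon> i"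
      using W(2)[of i] unfolding \<epsilon>_def by (auto simp: sgn_if)
    ultimately show ?thesis by simp
  qed
  have bad: False if aL: "a *\<^sub>R axis i 1 \<in> L" and neg: "\<epsilon> i * a < 0" for a i
  proof -
    have "- (a *\<^sub>R axis i (1::real)) = \<bar>a\<bar> *\<^sub>R (\<epsilon> i *\<^sub>R axis i 1)"
      using eps[of i] neg by (auto simp: abs_if)
    then have "- (a *\<^sub>R axis i (1::real)) \<in> L" using scl[OF epsL] by simp
    then have "a *\<^sub>R axis i 1 \<in> uminus ` L" by (metis image_eqI minus_minus)
    then have "a *\<^sub>R axis i (1::real) = 0" using aL pointed by blast
    then have "a = 0" by (simp add: axis_eq_0_iff)
    then show False using neg by simp
  qed
  have "L = {x. \<forall>i. \<epsilon> i * x $ i \<ge> 0}"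
  proof
    show "L \<subseteq> {x. \<forall>i. \<epsilon> i * x $ i \<ge> 0}"
    proof (clarify)
      fix w i assume "w \<in> L"
      then have "(w$i) *\<^sub>R axis i 1 \<in> L" by (rule comp)
      then show "\<epsilon> i * w $ i \<ge> 0" using bad by force
    qed
  next
    show "{x. \<forall>i. \<epsilon> i * x $ i \<ge> 0} \<subseteq> L"
    proof (clarify)
      fix x :: "real^'n" assume x: "\<forall>i. \<epsilon> i * x $ i \<ge> 0"
      have "x = (\<Sum>i\<in>UNIV. (x$i) *\<^sub>R axis i 1)"
        using basis_expansion[of x] by (simp add: scalar_mult_eq_scaleR)
      also have "\<dots> = (\<Sum>i\<in>UNIV. (\<epsilon> i * x$i) *\<^sub>R (\<epsilon> i *\<^sub>R axis i 1))"
      proof (rule sum.cong[OF refl])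
        fix i
        have "(\<epsilon> i * x$i) * \<epsilon> i = x$i" using eps2[of i] by (simp add: algebra_simps)
        then show "(x$i) *\<^sub>R axis i (1::real) = (\<epsilon> i * x$i) *\<^sub>R (\<epsilon> i *\<^sub>R axis i 1)" by simp
      qed
      also have "\<dots> \<in> L"
        by (rule ccs_sum[OF cc finite_class.finite_UNIV]) (use x scl epsL in blast)
      finally show "x \<in> L" .
    qed
  qed
  then show "\<exists>\<epsilon>::'n \<Rightarrow> real. (\<forall>i. \<epsilon> i \<in> {-1, 1}) \<and> L = {x. \<forall>i. \<epsilon> i * x $ i \<ge> 0}"
    using eps by blast
next
  assume "\<exists>\<epsilon>::'n \<Rightarrow> real. (\<forall>i. \<epsilon> i \<in> {-1, 1}) \<and> L = {x. \<forall>i. \<epsilon> i * x $ i \<ge> 0}"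
  then obtain \<epsilon> :: "'n \<Rightarrow> real" where eps: "\<forall>i. \<epsilon> i \<in> {-1, 1}" and L: "L = {x. \<forall>i. \<epsilon> i * x $ i \<ge> 0}"
    by blast
  have "(0::real^'n) \<in> nonneg_orthant" unfolding nonneg_orthant_def by simp
  then have ne: "(nonneg_orthant :: (real^'n) set) \<noteq> {}" by blast
  have "cone_le L (closest_point nonneg_orthant x) (closest_point nonneg_orthant y)"
    if "cone_le L x y" for x y :: "real^'n"
  proof -
    have h: "\<epsilon> i * (y$i - x$i) \<ge> 0" for i using that unfolding cone_le_def L by simp
    have "\<epsilon> i * (max (y$i) 0 - max (x$i) 0) \<ge> 0" for i
    proof -
      have "\<epsilon> i = -1 \<or> \<epsilon> i = 1" using eps by auto
      then show ?thesis using h[of i] by (auto simp: max_def)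
    qed
    then show ?thesis unfolding cone_le_def L orth_proj by simp
  qed
  then show "isotone_projection_set nonneg_orthant L"
    unfolding isotone_projection_set_def using ne orth_closed orth_convex by blast
qed


theorem corollary1:
  shows "(\<forall>(K::(real^'n) set) L.
            self_dual K \<and> proper_cone L \<and> isotone_projection_set K L
            \<and> (interior K \<inter> L \<noteq> {} \<or> interior K \<inter> dual_cone L \<noteq> {})
            \<longrightarrow> (\<exists>A::real^'n^'n. orthogonal_matrix A \<and> K = (\<lambda>x. A *v x) ` nonneg_orthant))
       \<and> (\<forall>L::(real^'n) set. proper_cone L \<longrightarrow>
            (isotone_projection_set nonneg_orthant L \<longleftrightarrow>
             (\<exists>\<epsilon>::'n \<Rightarrow> real. (\<forall>i. \<epsilon> i \<in> {-1, 1}) \<and> L = {x. \<forall>i. \<epsilon> i * x $ i \<ge> 0})))"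
proof (intro conjI allI impI)
  fix K L :: "(real^'n) set"
  assume h: "self_dual K \<and> proper_cone L \<and> isotone_projection_set K L
            \<and> (interior K \<inter> L \<noteq> {} \<or> interior K \<inter> dual_cone L \<noteq> {})"
  then have sd: "self_dual K" and pL: "proper_cone L" and iso: "isotone_projection_set K L"
    and int: "interior K \<inter> L \<noteq> {} \<or> interior K \<inter> dual_cone L \<noteq> {}" by blast+
  have LK: "L = K" using L_eq_K[OF sd pL iso int] .
  have mono: "\<And>x y. y - x \<in> K \<Longrightarrow> closest_point K y - closest_point K x \<in> K"
    using iso LK unfolding isotone_projection_set_def cone_le_def by blast
  obtain u where uK: "u \<in> interior K" using int by blast
  have gen: "{x - y | x y. x \<in> K \<and> y \<in> K} = UNIV" using pL LK unfolding proper_cone_def by blast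
  show "\<exists>A::real^'n^'n. orthogonal_matrix A \<and> K = (\<lambda>x. A *v x) ` nonneg_orthant"
    by (rule sd_iso_orthant[OF sd mono uK gen])
next
  fix L :: "(real^'n) set"
  assume "proper_cone L"
  then show "isotone_projection_set nonneg_orthant L \<longleftrightarrow>
             (\<exists>\<epsilon>::'n \<Rightarrow> real. (\<forall>i. \<epsilon> i \<in> {-1, 1}) \<and> L = {x. \<forall>i. \<epsilon> i * x $ i \<ge> 0})"
    by (rule part2)
qed

end
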